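(* Consider graph-based ANM with symmetric altruism where the $g_i$ are USL with common slope $\beta>0$, each modification adds/removes a single undirected edge, and an arbitrary target profile $x^*$ with $I=\{i: x^*_i=1\}$. Define $t_i=c_i-\big(g_i(1,n_i)-g_i(0,n_i)\big)$ (with $n_i$ evaluated at $x^*$). Construct the undirected graph $F^0=(V,E_F^0)$ with $\{i,j\}\in E_F^0$ iff $j\in N_H(i)\cap N_{G^0}(i)$; define degree sets $D_i=\{\lceil t_i/(a\beta)\rceil,\dots,n-1\}$ for $i\in I$ and $D_i=\{0,\dots,\lfloor t_i/(a\beta)\rfloor\}$ for $i\notin I$; define pair costs $c'_{ij}=c_{ij}$ if $\{i,j\}\in E_F^0$ or $\{i,j\}\in E_H$, and $c'_{ij}=+\infty$ otherwise. Then the minimum cost of modifying $G^0$ into an undirected graph $G$ such that $x^*$ is a PSNE of the game with altruism graph $G$ equals the minimum cost of modifying $F^0$ (adding/removing edges, where each pair $\{i,j\}$ in the symmetric difference costs $c'_{ij}$) into a graph $F$ such that $\deg_F(i)\in D_i$ for all $i\in V$.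
   Context: Binary networked public goods game (BNPG): a simple undirected loop-free graph $H=(V,E_H)$ on agents $V=\{1,\dots,n\}$; each agent $i$ chooses $x_i\in\{0,1\}$ ($1$ = invest). For a profile $x$, $n_i=\sum_{j\in N_H(i)}x_j$, where $N_H(i)$ is the set of neighbors of $i$ in $H$. Each agent has a function $g_i(x_i,n_i)\ge 0$, non-decreasing in both arguments, and an investment cost $c_i$. Given an altruism matrix $\alpha=(\alpha_{ij})$, the utility of agent $i$ is $u_i(x)=g_i(x_i,n_i)-c_ix_i+\sum_{j\in N_H(i)}\alpha_{ij}\,g_j(x_j,n_j)$. A profile $x$ is a pure-strategy Nash equilibrium (PSNE) if no agent can strictly increase its utility by unilaterally switching its action. Graph-based altruism: given an altruism graph $G$ on $V$ and a constant $a>0$, $\alpha_{ii}=1$, $\alpha_{ij}=a$ if $(i,j)$ is an edge of $G$, and $\alpha_{ij}=0$ otherwise; "symmetric altruism" means $G$ is undirected (an edge $\{i,j\}$ sets both $\alpha_{ij}=\alpha_{ji}=a$). $N_G(i)$ denotes the neighbor set of $i$ in $G$. Graph-based Altruism Network Modification (ANM): given $H$, the $g_i$, $c_i$, $a$, an initial altruism graph $G^0$, a target profile $x^*\in\{0,1\}^n$, and a cost $c_{ij}\ge 0$ for each undirected node pair — the cost of removing the edge if it is in $G^0$, and of adding it otherwise — find a graph $G$ obtained from $G^0$ by adding/removing edges, minimizing the total cost of the pairs in the symmetric difference of the edge sets of $G^0$ and $G$, such that $x^*$ is a PSNE of the game with altruism graph $G$. USL (uniform separable linear): every $g_i$ has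 the form $g_i(x_i,n_i)=h_i(x_i)+\beta n_i$ for some function $h_i$ and a constant $\beta$ common to all agents. *)

theory Defs
  imports Complex_Main "HOL-Library.Extended_Real"
begin

definition simple_graph :: "'v set set \<Rightarrow> bool" where
  "simple_graph E \<longleftrightarrow> (\<forall>e\<in>E. \<exists>i j. i \<noteq> j \<and> e = {i, j})"

definition nbrs :: "'v set set \<Rightarrow> 'v \<Rightarrow> 'v set" where
  "nbrs E i = {j. j \<noteq> i \<and> {i, j} \<in> E}"

definition deg :: "'v set set \<Rightarrow> 'v \<Rightarrow> nat" where
  "deg E i = card (nbrs E i)"

text \<open>Number of investing neighbours n_i of agent i in network H under profile x (values 0/1).\<close>
definition nb :: "'v::finite set set \<Rightarrow> ('v \<Rightarrow> nat) \<Rightarrow> 'v \<Rightarrow> nat" where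
  "nb H x i = (\<Sum>j\<in>nbrs H i. x j)"

definition utility :: "'v::finite set set \<Rightarrow> ('v \<Rightarrow> nat \<Rightarrow> nat \<Rightarrow> real) \<Rightarrow> ('v \<Rightarrow> real)
    \<Rightarrow> ('v \<Rightarrow> 'v \<Rightarrow> real) \<Rightarrow> ('v \<Rightarrow> nat) \<Rightarrow> 'v \<Rightarrow> real" where
  "utility H g c \<alpha> x i =
     g i (x i) (nb H x i) - c i * real (x i)
     + (\<Sum>j\<in>nbrs H i. \<alpha> i j * g j (x j) (nb H x j))"

definition PSNE :: "'v::finite set set \<Rightarrow> ('v \<Rightarrow> nat \<Rightarrow> nat \<Rightarrow> real) \<Rightarrow> ('v \<Rightarrow> real)
    \<Rightarrow> ('v \<Rightarrow> 'v \<Rightarrow> real) \<Rightarrow> ('v \<Rightarrow> nat) \<Rightarrow> bool" where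
  "PSNE H g c \<alpha> x \<longleftrightarrow> (\<forall>i. x i \<le> 1) \<and>
     (\<forall>i. \<not> (utility H g c \<alpha> (x(i := 1 - x i)) i > utility H g c \<alpha> x i))"

definition graph_altruism :: "real \<Rightarrow> 'v set set \<Rightarrow> 'v \<Rightarrow> 'v \<Rightarrow> real" where
  "graph_altruism a G i j = (if i = j then 1 else if {i, j} \<in> G then a else 0)"

definition symdiff :: "'a set \<Rightarrow> 'a set \<Rightarrow> 'a set" where
  "symdiff A B = (A - B) \<union> (B - A)"

text \<open>Optimal value of graph-based ANM (infimum over feasible graphs; +infinity if none).\<close>
definition ANM_opt :: "'v::finite set set \<Rightarrow> ('v \<Rightarrow> nat \<Rightarrow> nat \<Rightarrow> real) \<Rightarrow> ('v \<Rightarrow> real)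
    \<Rightarrow> real \<Rightarrow> 'v set set \<Rightarrow> ('v \<Rightarrow> nat) \<Rightarrow> ('v set \<Rightarrow> real) \<Rightarrow> ereal" where
  "ANM_opt H g c a G0 xs cost =
     Inf {ereal (\<Sum>e\<in>symdiff G0 G. cost e) | G.
            simple_graph G \<and> PSNE H g c (graph_altruism a G) xs}"

definition degmod_opt :: "'v::finite set set \<Rightarrow> ('v \<Rightarrow> int set) \<Rightarrow> ('v set \<Rightarrow> ereal) \<Rightarrow> ereal" where
  "degmod_opt F0 D cost' =
     Inf {(\<Sum>e\<in>symdiff F0 F. cost' e) | F.
            simple_graph F \<and> (\<forall>i. int (deg F i) \<in> D i)}"

end

theory Submission
  imports Defs
begin

lemma nb_upd:
  assumes "j \<in> nbrs H i"
  shows "real (nb H (x(i:=v)) j) = real (nb H x j) - real (x i) + real v"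
proof -
  have i: "i \<in> nbrs H j" using assms by (auto simp: nbrs_def insert_commute)
  have f: "finite (nbrs H j)" by simp
  have ij: "i \<noteq> j" using i by (auto simp: nbrs_def)
  have "nb H (x(i:=v)) j = v + sum (x(i:=v)) (nbrs H j - {i})"
    unfolding nb_def using sum.remove[OF f i, of "x(i:=v)"] by simp
  also have "sum (x(i:=v)) (nbrs H j - {i}) = sum x (nbrs H j - {i})"
    by (rule sum.cong) auto
  finally have 1: "nb H (x(i:=v)) j = v + sum x (nbrs H j - {i})" .
  have 2: "nb H x j = x i + sum x (nbrs H j - {i})"
    unfolding nb_def using sum.remove[OF f i, of x] by simp
  show ?thesis using 1 2 by simp
qed

lemma nb_upd_self: "nb H (x(i:=v)) i = nb H x i"
  unfolding nb_def by (rule sum.cong) (auto simp: nbrs_def)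

lemma util_diff:
  assumes g: "\<And>i u m. g i u m = h i u + \<beta> * real m"
  shows "utility H g c \<alpha> (x(i:=v)) i - utility H g c \<alpha> x i
    = h i v - h i (x i) - c i * (real v - real (x i)) + \<beta> * (real v - real (x i)) * (\<Sum>j\<in>nbrs H i. \<alpha> i j)"
proof -
  have ni: "i \<notin> nbrs H i" by (simp add: nbrs_def)
  have s: "(\<Sum>j\<in>nbrs H i. \<alpha> i j * g j ((x(i:=v)) j) (nb H (x(i:=v)) j))
     = (\<Sum>j\<in>nbrs H i. \<alpha> i j * g j (x j) (nb H x j)) + (\<Sum>j\<in>nbrs H i. \<alpha> i j * (\<beta> * (real v - real (x i))))"
  proof -
    have "(\<Sum>j\<in>nbrs H i. \<alpha> i j * g j ((x(i:=v)) j) (nb H (x(i:=v)) j))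
       = (\<Sum>j\<in>nbrs H i. \<alpha> i j * g j (x j) (nb H x j) + \<alpha> i j * (\<beta> * (real v - real (x i))))"
    proof (rule sum.cong)
      fix j assume j: "j \<in> nbrs H i"
      hence "j \<noteq> i" by (auto simp: nbrs_def)
      thus "\<alpha> i j * g j ((x(i:=v)) j) (nb H (x(i:=v)) j) = \<alpha> i j * g j (x j) (nb H x j) + \<alpha> i j * (\<beta> * (real v - real (x i)))"
        by (simp add: g nb_upd[OF j] algebra_simps)
    qed simp
    thus ?thesis by (simp add: sum.distrib)
  qed
  have s2: "(\<Sum>j\<in>nbrs H i. \<alpha> i j * (\<beta> * (real v - real (x i)))) = \<beta> * (real v - real (x i)) * (\<Sum>j\<in>nbrs H i. \<alpha> i j)"
    by (simp add: sum_distrib_right[symmetric] mult.commute)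
  show ?thesis
    unfolding utility_def nb_upd_self s s2
    by (simp add: g algebra_simps)
qed

lemma sum_alt:
  fixes H G :: "'v::finite set set"
  assumes "simple_graph H"
  shows "(\<Sum>j\<in>nbrs H i. graph_altruism a G i j) = a * real (deg (H \<inter> G) i)"
proof -
  have "(\<Sum>j\<in>nbrs H i. graph_altruism a G i j) = (\<Sum>j\<in>nbrs H i. if j \<in> nbrs G i then a else 0)"
    by (rule sum.cong) (auto simp: graph_altruism_def nbrs_def)
  also have "\<dots> = (\<Sum>j\<in>nbrs H i \<inter> nbrs G i. a)"
    using sum.inter_restrict[of "nbrs H i" "\<lambda>_. a" "nbrs G i"] by (simp add: mult.commute)
  also have "nbrs H i \<inter> nbrs G i = nbrs (H \<inter> G) i" by (auto simp: nbrs_def)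
  finally show ?thesis by (simp add: deg_def)
qed


lemma deg_le: "deg F (i::'v::finite) \<le> card (UNIV::'v set) - 1"
proof -
  have "nbrs F i \<subseteq> UNIV - {i}" by (auto simp: nbrs_def)
  hence "card (nbrs F i) \<le> card (UNIV - {i})" by (intro card_mono) auto
  thus ?thesis by (simp add: deg_def card_Diff_singleton)
qed

lemma psne_iff:
  fixes H :: "'v::finite set set"
  assumes g: "\<And>i u m. g i u m = h i u + \<beta> * real m"
    and H: "simple_graph H" and b: "\<beta> > 0" and a: "a > 0" and xs: "\<And>i. xs i \<le> 1"
  shows "PSNE H g c (graph_altruism a G) xs \<longleftrightarrow>
    (\<forall>i. int (deg (H \<inter> G) i) \<in> (if xs i = 1
                   then {k::int. \<lceil>(c i - (g i 1 (nb H xs i) - g i 0 (nb H xs i))) / (a * \<beta>)\<rceil> \<le> k \<and> k \<le> int (card (UNIV::'v set)) - 1}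
                   else {k::int. 0 \<le> k \<and> k \<le> \<lfloor>(c i - (g i 1 (nb H xs i) - g i 0 (nb H xs i))) / (a * \<beta>)\<rfloor>}))"
proof -
  have ab: "a * \<beta> > 0" using a b by simp
  have per: "(\<not> utility H g c (graph_altruism a G) (xs(i := 1 - xs i)) i > utility H g c (graph_altruism a G) xs i)
     \<longleftrightarrow> int (deg (H \<inter> G) i) \<in> (if xs i = 1
                   then {k::int. \<lceil>(c i - (g i 1 (nb H xs i) - g i 0 (nb H xs i))) / (a * \<beta>)\<rceil> \<le> k \<and> k \<le> int (card (UNIV::'v set)) - 1}
                   else {k::int. 0 \<le> k \<and> k \<le> \<lfloor>(c i - (g i 1 (nb H xs i) - g i 0 (nb H xs i))) / (a * \<beta>)\<rfloor>})" for i
  proof -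
    define d where "d = real (deg (H \<inter> G) i)"
    define t where "t = c i - (h i 1 - h i 0)"
    have tt: "c i - (g i 1 (nb H xs i) - g i 0 (nb H xs i)) = t" by (simp add: g t_def)
    have D: "utility H g c (graph_altruism a G) (xs(i := 1 - xs i)) i - utility H g c (graph_altruism a G) xs i
      = h i (1 - xs i) - h i (xs i) - c i * (real (1 - xs i) - real (xs i)) + \<beta> * (real (1 - xs i) - real (xs i)) * (a * d)"
      unfolding util_diff[OF g] sum_alt[OF H] d_def by simp
    have dl: "int (deg (H \<inter> G) i) \<le> int (card (UNIV::'v set)) - 1"
    proof -
      have c0: "0 < card (UNIV::'v set)" by (simp add: finite_UNIV_card_ge_0)
      show ?thesis using deg_le[of "H \<inter> G" i] c0 by (simp add: of_nat_diff)
    qed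
    show ?thesis
    proof (cases "xs i = 1")
      case True
      have "(\<not> utility H g c (graph_altruism a G) (xs(i := 1 - xs i)) i > utility H g c (graph_altruism a G) xs i)
          \<longleftrightarrow> t \<le> (a * \<beta>) * d" using D True by (auto simp: t_def algebra_simps)
      also have "\<dots> \<longleftrightarrow> t / (a * \<beta>) \<le> d" using ab by (simp add: pos_divide_le_eq mult.commute)
      also have "\<dots> \<longleftrightarrow> \<lceil>t / (a * \<beta>)\<rceil> \<le> int (deg (H \<inter> G) i)" by (simp add: d_def ceiling_le_iff)
      finally show ?thesis using True tt dl by simp
    next
      case False
      hence x0: "xs i = 0" using xs[of i] by linarith
      have "(\<not> utility H g c (graph_altruism a G) (xs(i := 1 - xs i)) i > utility H g c (graph_altruism a G) xs i)
          \<longleftrightarrow> (a * \<beta>) * d \<le> t" using D x0 by (auto simp: t_def algebra_simps)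
      also have "\<dots> \<longleftrightarrow> d \<le> t / (a * \<beta>)" using ab by (simp add: pos_le_divide_eq mult.commute)
      also have "\<dots> \<longleftrightarrow> int (deg (H \<inter> G) i) \<le> \<lfloor>t / (a * \<beta>)\<rfloor>" by (simp add: d_def le_floor_iff)
      finally show ?thesis using False tt by simp
    qed
  qed
  show ?thesis unfolding PSNE_def using per xs by blast
qed

theorem theorem5:
  fixes H G0 :: "'v::finite set set"
    and g :: "'v \<Rightarrow> nat \<Rightarrow> nat \<Rightarrow> real"
    and c :: "'v \<Rightarrow> real"
    and a \<beta> :: real
    and xs :: "'v \<Rightarrow> nat"
    and cost :: "'v set \<Rightarrow> real"
  assumes H: "simple_graph H"
    and G0: "simple_graph G0"
    and g_nonneg: "\<And>i u m. g i u m \<ge> 0"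
    and g_mono: "\<And>i u u' m m'. u \<le> u' \<Longrightarrow> m \<le> m' \<Longrightarrow> g i u m \<le> g i u' m'"
    and USL: "\<exists>h :: 'v \<Rightarrow> nat \<Rightarrow> real. \<forall>i u m. g i u m = h i u + \<beta> * real m"
    and beta_pos: "\<beta> > 0"
    and a_pos: "a > 0"
    and xs_bin: "\<And>i. xs i \<le> 1"
    and cost_nonneg: "\<And>e. cost e \<ge> 0"
  shows
    "let n = card (UNIV :: 'v set);
         t = (\<lambda>i. c i - (g i 1 (nb H xs i) - g i 0 (nb H xs i)));
         F0 = {{i, j} | i j. i \<noteq> j \<and> j \<in> nbrs H i \<inter> nbrs G0 i};
         D = (\<lambda>i. if xs i = 1
                   then {k::int. \<lceil>t i / (a * \<beta>)\<rceil> \<le> k \<and> k \<le> int n - 1}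
                   else {k::int. 0 \<le> k \<and> k \<le> \<lfloor>t i / (a * \<beta>)\<rfloor>});
         cost' = (\<lambda>e. if e \<in> F0 \<or> e \<in> H then ereal (cost e) else \<infinity>)
     in ANM_opt H g c a G0 xs cost = degmod_opt F0 D cost'"
proof -
  obtain h :: "'v \<Rightarrow> nat \<Rightarrow> real" where g: "\<And>i u m. g i u m = h i u + \<beta> * real m" using USL by blast
  define F0 where "F0 = {{i, j} | i j. i \<noteq> j \<and> j \<in> nbrs H i \<inter> nbrs G0 i}"
  define D where "D = (\<lambda>i. if xs i = 1
                   then {k::int. \<lceil>(c i - (g i 1 (nb H xs i) - g i 0 (nb H xs i))) / (a * \<beta>)\<rceil> \<le> k \<and> k \<le> int (card (UNIV::'v set)) - 1}
                   else {k::int. 0 \<le> k \<and> k \<le> \<lfloor>(c i - (g i 1 (nb H xs i) - g i 0 (nb H xs i))) / (a * \<beta>)\<rfloor>})"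
  define cost' where "cost' = (\<lambda>e. if e \<in> F0 \<or> e \<in> H then ereal (cost e) else \<infinity>)"
  have F0eq: "F0 = H \<inter> G0"
  proof
    show "F0 \<subseteq> H \<inter> G0" by (auto simp: F0_def nbrs_def)
    show "H \<inter> G0 \<subseteq> F0"
    proof
      fix e assume e: "e \<in> H \<inter> G0"
      then obtain i j where "i \<noteq> j" "e = {i, j}" using H unfolding simple_graph_def by blast
      thus "e \<in> F0" using e by (auto simp: F0_def nbrs_def)
    qed
  qed
  have PQ: "PSNE H g c (graph_altruism a G) xs \<longleftrightarrow> (\<forall>i. int (deg (H \<inter> G) i) \<in> D i)" for G
    unfolding D_def by (rule psne_iff[OF g H beta_pos a_pos xs_bin])
  have sumH: "sum cost' S = ereal (sum cost S)" if "S \<subseteq> H" for S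
  proof -
    have "sum cost' S = (\<Sum>e\<in>S. ereal (cost e))" by (rule sum.cong) (use that in \<open>auto simp: cost'_def\<close>)
    thus ?thesis by simp
  qed
  have "ANM_opt H g c a G0 xs cost = degmod_opt F0 D cost'"
  proof (rule antisym)
    show "ANM_opt H g c a G0 xs cost \<le> degmod_opt F0 D cost'"
      unfolding degmod_opt_def
    proof (rule Inf_greatest, clarify)
      fix F assume sF: "simple_graph F" and dF: "\<forall>i. int (deg F i) \<in> D i"
      show "ANM_opt H g c a G0 xs cost \<le> sum cost' (symdiff F0 F)"
      proof (cases "F \<subseteq> H")
        case False
        then obtain e where e: "e \<in> F" "e \<notin> H" by blast
        hence e2: "e \<in> symdiff F0 F" "e \<notin> F0" using F0eq by (auto simp: symdiff_def)
        have r: "sum cost' (symdiff F0 F) = cost' e + sum cost' (symdiff F0 F - {e})"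
          by (rule sum.remove) (use e2 in simp_all)
        have "0 \<le> sum cost' (symdiff F0 F - {e})"
          by (rule sum_nonneg) (use cost_nonneg in \<open>auto simp: cost'_def\<close>)
        hence "sum cost' (symdiff F0 F) = \<infinity>" using r e e2 by (simp add: cost'_def)
        thus ?thesis by simp
      next
        case True
        define G where "G = (G0 - H) \<union> F"
        have HG: "H \<inter> G = F" using True by (auto simp: G_def)
        have sG: "simple_graph G" using G0 sF by (auto simp: simple_graph_def G_def)
        have pG: "PSNE H g c (graph_altruism a G) xs" using PQ[of G] HG dF by simp
        have sH: "symdiff F0 F \<subseteq> H" using True F0eq by (auto simp: symdiff_def)
        have sd: "symdiff G0 G = symdiff F0 F" using True F0eq by (auto simp: symdiff_def G_def)
        have "ANM_opt H g c a G0 xs cost \<le> ereal (\<Sum>e\<in>symdiff G0 G. cost e)"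
          unfolding ANM_opt_def by (rule Inf_lower) (use sG pG in blast)
        also have "\<dots> = sum cost' (symdiff F0 F)"
          using sd sumH[OF sH] by simp
        finally show ?thesis .
      qed
    qed
  next
    show "degmod_opt F0 D cost' \<le> ANM_opt H g c a G0 xs cost"
      unfolding ANM_opt_def
    proof (rule Inf_greatest, clarify)
      fix G assume sG: "simple_graph G" and pG: "PSNE H g c (graph_altruism a G) xs"
      define F where "F = H \<inter> G"
      have sF: "simple_graph F" using H by (auto simp: simple_graph_def F_def)
      have dF: "\<forall>i. int (deg F i) \<in> D i" using PQ[of G] pG by (simp add: F_def)
      have sub: "symdiff F0 F \<subseteq> symdiff G0 G" using F0eq by (auto simp: symdiff_def F_def)
      have subH: "symdiff F0 F \<subseteq> H" using F0eq by (auto simp: symdiff_def F_def)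
      have "degmod_opt F0 D cost' \<le> sum cost' (symdiff F0 F)"
        unfolding degmod_opt_def by (rule Inf_lower) (use sF dF in blast)
      also have "\<dots> = ereal (sum cost (symdiff F0 F))" using sumH[OF subH] .
      also have "\<dots> \<le> ereal (sum cost (symdiff G0 G))"
        using sum_mono2[OF _ sub, of cost] cost_nonneg by simp
      finally show "degmod_opt F0 D cost' \<le> ereal (sum cost (symdiff G0 G))" .
    qed
  qed
  thus ?thesis unfolding Let_def F0_def[symmetric] D_def[symmetric] cost'_def[symmetric] by simp
qed

end
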